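(* Let $x=(x_0x_1)^{-1}$ and $y=x_2xx_2^{-1}$. For every integer $n\ge1$, $x^n$ has one of the forms $M_0([28,235,129],[29,211,263],\dots)$, $M_0([28,235,129],[46,138,451],\dots)$, $M_{2^r-1}([51,89,196],[0,0,0],\dots)$ for some odd $r\ge1$, or $M_{2^r-1}([28,235,129],[0,0,0],\dots)$ for some even $r\ge2$; and for every $n\ge1$, $y^n$ has one of the forms $M_0([28,235,129],[58,3,445],\dots)$, $M_0([28,235,129],[9,90,377],\dots)$, $M_{2^r-1}([51,89,196],[0,157,106],\dots)$ for some odd $r\ge1$, or $M_{2^r-1}([28,235,129],[39,208,186],\dots)$ for some even $r\ge2$.
   Context: Consider infinite upper unitriangular block matrices $X=(X_{r,s})_{r,s\ge1}$ whose entries are $3\times3$ matrices over $\mathbb F_2$, with $X_{r,r}=I$, $X_{r,s}=0$ for $s<r$, and whose upper diagonals are $3$-periodic: for each $j\ge1$ there are $a_{j1},a_{j2},a_{j3}\in M(3,\mathbb F_2)$ with $X_{r,r+j}=a_{j,i}$, where $i\in\{1,2,3\}$, $i\equiv r\pmod 3$; $a_j=[a_{j1},a_{j2},a_{j3}]$ is the $j$-th upper diagonal. For $l\ge0$, $M_l(c_1,c_2,\dots)$ denotes such a matrix whose first $l$ upper diagonals are zero and whose $(l+1)$-st, $(l+2)$-nd, $\dots$ upper diagonals are $c_1,c_2,\dots$; diagonals hidden in "$\dots$" are unspecified, while a matrix written $M_0(c_1,\dots,c_m)$ without dots has all further diagonals zero. A matrix $u=(u_{pq})\in M(3,\mathbb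 F_2)$ is encoded by the integer $256u_{11}+128u_{12}+64u_{13}+32u_{21}+16u_{22}+8u_{23}+4u_{31}+2u_{32}+u_{33}$, and a diagonal by the triple of integers of its three blocks. The elements are $x_0=M_0([11,11,11],[17,17,17],[26,26,26],[11,11,0],[17,0,0])$, $x_1=M_0([23,224,138],[59,136,495],[26,488,227],[23,224,0],[59,0,0])$, $x_2=M_0([46,68,217],[12,194,363],[26,326,77],[46,68,0],[12,0,0])$. *)

theory Defs
  imports "HOL-Analysis.Analysis" "HOL-Library.Z2"
begin

type_synonym blk = "bit^3^3"

text \<open>Infinite block matrices, block (r,s) for r,s >= 1 (index 0 is unused).\<close>
type_synonym imat = "nat \<Rightarrow> nat \<Rightarrow> blk"

definition idx3 :: "3 \<Rightarrow> nat" where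
  "idx3 p = (if p = 0 then 0 else if p = 1 then 1 else 2)"

text \<open>Integer encoding: 256 u11 + 128 u12 + 64 u13 + 32 u21 + ... + u33.\<close>
definition blk_of_code :: "nat \<Rightarrow> blk" where
  "blk_of_code c = (\<chi> p q. of_bool (odd (c div 2 ^ (8 - (3 * idx3 p + idx3 q)))))"

text \<open>A diagonal given by the integer codes of its three blocks.\<close>
type_synonym dcode = "nat \<times> nat \<times> nat"

definition diag_blk :: "dcode \<Rightarrow> nat \<Rightarrow> blk" where
  "diag_blk c i = (case c of (a, b, d) \<Rightarrow>
      blk_of_code (if i = 1 then a else if i = 2 then b else d))"

definition cls3 :: "nat \<Rightarrow> nat" where
  "cls3 r = (if r mod 3 = 0 then 3 else r mod 3)"

definition Iim :: imat where
  "Iim r s = (if r = s then mat 1 else 0)"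

definition imult :: "imat \<Rightarrow> imat \<Rightarrow> imat" (infixl "\<odot>" 70) where
  "(X \<odot> Y) r s = (\<Sum>t\<in>{r..s}. X r t ** Y t s)"

fun ipow :: "imat \<Rightarrow> nat \<Rightarrow> imat" where
  "ipow X 0 = Iim"
| "ipow X (Suc n) = X \<odot> ipow X n"

text \<open>Inverse of an upper unitriangular matrix X = I + N: (I + N)^{-1} = sum_k (-N)^k,
  where only k <= s - r contribute to entry (r,s).\<close>
definition iinv :: "imat \<Rightarrow> imat" where
  "iinv X r s = (\<Sum>k\<le>s - r. ipow (\<lambda>a b. - (X a b - Iim a b)) k r s)"

definition upper_unitri :: "imat \<Rightarrow> bool" where
  "upper_unitri X \<longleftrightarrow> (\<forall>r\<ge>1. X r r = mat 1) \<and> (\<forall>r s. 1 \<le> s \<and> s < r \<longrightarrow> X r s = 0)"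

definition periodic3 :: "imat \<Rightarrow> bool" where
  "periodic3 X \<longleftrightarrow> (\<forall>r s. 1 \<le> r \<and> 1 \<le> s \<longrightarrow> X (r + 3) (s + 3) = X r s)"

text \<open>M_l(c_1,...,c_m,...): diagonals 1..l zero, diagonals l+1,...,l+m equal to c_1..c_m,
  further diagonals unspecified.\<close>
definition is_M :: "nat \<Rightarrow> dcode list \<Rightarrow> imat \<Rightarrow> bool" where
  "is_M l cs X \<longleftrightarrow> upper_unitri X \<and> periodic3 X \<and>
     (\<forall>j i. 1 \<le> j \<and> j \<le> l \<and> 1 \<le> i \<and> i \<le> 3 \<longrightarrow> X i (i + j) = 0) \<and>
     (\<forall>k i. k < length cs \<and> 1 \<le> i \<and> i \<le> 3 \<longrightarrow> X i (i + l + 1 + k) = diag_blk (cs ! k) i)"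

text \<open>M_0(c_1,...,c_m) without dots: all further diagonals zero.\<close>
definition Mfin :: "dcode list \<Rightarrow> imat" where
  "Mfin cs r s = (if s < r then 0 else if s = r then mat 1
                  else if s - r \<le> length cs then diag_blk (cs ! (s - r - 1)) (cls3 r) else 0)"

definition x0 :: imat where
  "x0 = Mfin [(11,11,11),(17,17,17),(26,26,26),(11,11,0),(17,0,0)]"
definition x1 :: imat where
  "x1 = Mfin [(23,224,138),(59,136,495),(26,488,227),(23,224,0),(59,0,0)]"
definition x2 :: imat where
  "x2 = Mfin [(46,68,217),(12,194,363),(26,326,77),(46,68,0),(12,0,0)]"

definition xx :: imat where
  "xx = iinv (x0 \<odot> x1)"
definition yy :: imat where
  "yy = x2 \<odot> xx \<odot> iinv x2"

end

theory Submission
  imports Defs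
begin


lemma blk_add_self[simp]: "(a::blk) + a = 0"
  by (simp add: vec_eq_iff)
lemma blk_two[simp]: "2 * (a::blk) = 0"
  by (simp add: vec_eq_iff)
lemma blk_uminus[simp]: "- (a::blk) = a"
  by (simp add: vec_eq_iff)
lemma blk_minus[simp]: "(a::blk) - b = a + b"
  by (simp add: vec_eq_iff)

lemma mat_add_rdistrib: "((A::'a::semiring_1^'n^'m) + B) ** C = A ** C + B ** C"
  by (vector matrix_matrix_mult_def sum.distrib[symmetric] field_simps)

lemma mat_sum_rdistrib: "(sum f S :: blk) ** (M::blk) = (\<Sum>k\<in>S. f k ** M)"
  by (induct S rule: infinite_finite_induct) (simp_all add: mat_add_rdistrib[of _ _ M])

lemma mat_sum_ldistrib: "(M::blk) ** (sum f S :: blk) = (\<Sum>k\<in>S. M ** f k)"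
  by (induct S rule: infinite_finite_induct) (simp_all add: matrix_add_ldistrib)

lemma sum_triangle:
  fixes g :: "nat \<Rightarrow> nat \<Rightarrow> blk"
  shows "(\<Sum>t\<in>{r..s}. \<Sum>u\<in>{r..t}. g u t) = (\<Sum>u\<in>{r..s}. \<Sum>t\<in>{u..s}. g u t)"
proof -
  have "(\<Sum>t\<in>{r..s}. \<Sum>u\<in>{r..t}. g u t) = (\<Sum>t\<in>{r..s}. \<Sum>u\<in>{r..s}. if u \<le> t then g u t else 0)"
  proof (rule sum.cong[OF refl])
    fix t assume "t \<in> {r..s}"
    then have "{r..t} = {r..s} \<inter> {u. u \<le> t}" by auto
    then show "(\<Sum>u\<in>{r..t}. g u t) = (\<Sum>u\<in>{r..s}. if u \<le> t then g u t else 0)"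
      by (simp add: sum.inter_restrict)
  qed
  also have "\<dots> = (\<Sum>u\<in>{r..s}. \<Sum>t\<in>{r..s}. if u \<le> t then g u t else 0)"
    by (rule sum.swap)
  also have "\<dots> = (\<Sum>u\<in>{r..s}. \<Sum>t\<in>{u..s}. g u t)"
  proof (rule sum.cong[OF refl])
    fix u assume "u \<in> {r..s}"
    then have "{u..s} = {r..s} \<inter> {t. u \<le> t}" by auto
    then show "(\<Sum>t\<in>{r..s}. if u \<le> t then g u t else 0) = (\<Sum>t\<in>{u..s}. g u t)"
      by (simp add: sum.inter_restrict)
  qed
  finally show ?thesis .
qed

lemma imult_assoc: "(X \<odot> Y) \<odot> Z = X \<odot> (Y \<odot> Z)"
proof (rule ext, rule ext)
  fix r s
  have "((X \<odot> Y) \<odot> Z) r s = (\<Sum>t\<in>{r..s}. \<Sum>u\<in>{r..t}. X r u ** Y u t ** Z t s)"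
    by (simp add: imult_def mat_sum_rdistrib)
  also have "\<dots> = (\<Sum>u\<in>{r..s}. \<Sum>t\<in>{u..s}. X r u ** Y u t ** Z t s)"
    by (rule sum_triangle)
  also have "\<dots> = (X \<odot> (Y \<odot> Z)) r s"
    by (simp add: imult_def mat_sum_ldistrib matrix_mul_assoc)
  finally show "((X \<odot> Y) \<odot> Z) r s = (X \<odot> (Y \<odot> Z)) r s" .
qed

definition upper :: "imat \<Rightarrow> bool" where
  "upper X \<longleftrightarrow> (\<forall>r s. s < r \<longrightarrow> X r s = 0)"

lemma upper_imult[simp]: "upper (X \<odot> Y)"
  by (simp add: upper_def imult_def)

lemma upper_Iim[simp]: "upper Iim"
  by (simp add: upper_def Iim_def)

lemma upper_ipow[simp]: "upper (ipow X n)"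
  by (cases n) simp_all

lemma Iim_left: assumes "upper X" shows "Iim \<odot> X = X"
proof (rule ext, rule ext)
  fix r s
  show "(Iim \<odot> X) r s = X r s"
  proof (cases "s < r")
    case True then show ?thesis using assms by (simp add: imult_def upper_def)
  next
    case False
    have "(Iim \<odot> X) r s = (\<Sum>t\<in>{r..s}. if t = r then X r s else 0)"
      unfolding imult_def by (rule sum.cong) (auto simp: Iim_def)
    also have "\<dots> = X r s" using False by simp
    finally show ?thesis .
  qed
qed

lemma Iim_right: assumes "upper X" shows "X \<odot> Iim = X"
proof (rule ext, rule ext)
  fix r s
  show "(X \<odot> Iim) r s = X r s"
  proof (cases "s < r")
    case True then show ?thesis using assms by (simp add: imult_def upper_def)
  next
    case False
    have "(X \<odot> Iim) r s = (\<Sum>t\<in>{r..s}. if t = s then X r s else 0)"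
      unfolding imult_def by (rule sum.cong) (auto simp: Iim_def)
    also have "\<dots> = X r s" using False by simp
    finally show ?thesis .
  qed
qed

lemma ipow_add: "ipow X (m + n) = ipow X m \<odot> ipow X n"
  by (induct m) (simp_all add: Iim_left imult_assoc)

lemma ipow_one: "upper X \<Longrightarrow> ipow X 1 = X"
  by (simp add: Iim_right)

lemma imult_diag: "(X \<odot> Y) r (r + j) = (\<Sum>k\<le>j. X r (r + k) ** Y (r + k) (r + j))"
proof -
  have "(X \<odot> Y) r (r + j) = (\<Sum>t\<in>{0+r..j+r}. X r t ** Y t (r + j))"
    by (simp add: imult_def add.commute)
  also have "\<dots> = (\<Sum>k\<in>{0..j}. X r (k + r) ** Y (k + r) (r + j))"
    by (rule sum.shift_bounds_cl_nat_ivl)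
  finally show ?thesis by (simp add: atLeast0AtMost add.commute)
qed



lemma sum_support:
  fixes f :: "nat \<Rightarrow> blk"
  assumes "S \<subseteq> {..j}" "\<And>k. k \<le> j \<Longrightarrow> k \<notin> S \<Longrightarrow> f k = 0"
  shows "(\<Sum>k\<le>j. f k) = sum f S"
  by (rule sum.mono_neutral_right) (use assms in auto)

definition unit :: "imat \<Rightarrow> bool" where
  "unit X \<longleftrightarrow> (\<forall>r. X r r = mat 1)"

lemma prod_diag0: "(X \<odot> Y) r r = X r r ** Y r r"
  using imult_diag[of X Y r 0] by simp

lemma prod_diag1:
  assumes "unit X" "unit Y"
  shows "(X \<odot> Y) r (Suc r) = X r (Suc r) + Y r (Suc r)"
  using imult_diag[of X Y r 1] assms by (simp add: unit_def add.commute)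

lemma prod_diag2:
  assumes "unit X" "unit Y"
  shows "(X \<odot> Y) r (Suc (Suc r)) = X r (Suc (Suc r)) + X r (Suc r) ** Y (Suc r) (Suc (Suc r)) + Y r (Suc (Suc r))"
  using imult_diag[of X Y r 2] assms by (simp add: unit_def numeral_2_eq_2 add.commute)

definition FormF :: "nat \<Rightarrow> (nat \<Rightarrow> blk) \<Rightarrow> (nat \<Rightarrow> blk) \<Rightarrow> imat \<Rightarrow> bool" where
  "FormF l C D X \<longleftrightarrow> upper X \<and> unit X \<and> (\<forall>r j. 0 < j \<and> j \<le> l \<longrightarrow> X r (r + j) = 0) \<and>
     (\<forall>r. X r (r + l + 1) = C r) \<and> (\<forall>r. X r (r + l + 2) = D r)"

lemma FormF_cong: "FormF l C D X \<Longrightarrow> (\<And>r. C r = C' r) \<Longrightarrow> (\<And>r. D r = D' r) \<Longrightarrow> FormF l C' D' X"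
  by (simp add: FormF_def)

lemma FormF_sq:
  assumes F: "FormF l C D X"
  shows "FormF (2 * l + 1) (\<lambda>r. C r ** C (r + l + 1)) (\<lambda>r. C r ** D (r + l + 1) + D r ** C (r + l + 2)) (X \<odot> X)"
proof -
  have up: "upper X" and un: "\<And>r. X r r = mat 1"
    and z: "\<And>r j. 0 < j \<Longrightarrow> j \<le> l \<Longrightarrow> X r (r + j) = 0"
    and c: "\<And>r. X r (r + l + 1) = C r" and d: "\<And>r. X r (r + l + 2) = D r"
    using F by (auto simp: FormF_def unit_def)
  have z2: "X a b = 0" if "a < b" "b \<le> a + l" for a b
    using z[of "b - a" a] that by simp
  have c2: "X a b = C a" if "b = a + l + 1" for a b using c that by simp
  have d2: "X a b = D a" if "b = a + l + 2" for a b using d that by simp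
  have unit2: "unit (X \<odot> X)" by (simp add: unit_def prod_diag0 un)
  have zero: "(X \<odot> X) r (r + j) = 0" if "0 < j" "j \<le> 2 * l + 1" for r j
  proof -
    have "(X \<odot> X) r (r + j) = (\<Sum>k\<in>{0, j}. X r (r + k) ** X (r + k) (r + j))"
      unfolding imult_diag
    proof (rule sum_support)
      fix k assume "k \<le> j" "k \<notin> {0, j}"
      then show "X r (r + k) ** X (r + k) (r + j) = 0"
        using that by (cases "k \<le> l") (auto simp: z2)
    qed auto
    then show ?thesis using that un by simp
  qed
  have cc: "(X \<odot> X) r (r + (2 * l + 1) + 1) = C r ** C (r + l + 1)" for r
  proof -
    have "(X \<odot> X) r (r + (2 * l + 2)) = (\<Sum>k\<in>{0, l + 1, 2 * l + 2}. X r (r + k) ** X (r + k) (r + (2 * l + 2)))"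
      unfolding imult_diag
    proof (rule sum_support)
      fix k assume "k \<le> 2 * l + 2" "k \<notin> {0, l + 1, 2 * l + 2}"
      then show "X r (r + k) ** X (r + k) (r + (2 * l + 2)) = 0"
        by (cases "k \<le> l") (auto simp: z2)
    qed auto
    also have "\<dots> = C r ** C (r + l + 1)"
      using un by (simp add: c2 add.assoc)
    finally have fin: "(X \<odot> X) r (r + (2 * l + 2)) = C r ** C (r + l + 1)" .
    have e: "r + (2 * l + 1) + 1 = r + (2 * l + 2)" by simp
    show ?thesis unfolding e by (rule fin)
  qed
  have dd: "(X \<odot> X) r (r + (2 * l + 1) + 2) = C r ** D (r + l + 1) + D r ** C (r + l + 2)" for r
  proof -
    have "(X \<odot> X) r (r + (2 * l + 3)) = (\<Sum>k\<in>{0, l + 1, l + 2, 2 * l + 3}. X r (r + k) ** X (r + k) (r + (2 * l + 3)))"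
      unfolding imult_diag
    proof (rule sum_support)
      fix k assume "k \<le> 2 * l + 3" "k \<notin> {0, l + 1, l + 2, 2 * l + 3}"
      then show "X r (r + k) ** X (r + k) (r + (2 * l + 3)) = 0"
        by (cases "k \<le> l") (auto simp: z2)
    qed auto
    also have "\<dots> = C r ** D (r + l + 1) + D r ** C (r + l + 2)"
      using un by (simp add: c2 d2 add.assoc)
    finally have fin: "(X \<odot> X) r (r + (2 * l + 3)) = C r ** D (r + l + 1) + D r ** C (r + l + 2)" .
    have e: "r + (2 * l + 1) + 2 = r + (2 * l + 3)" by simp
    show ?thesis unfolding e by (rule fin)
  qed
  show ?thesis unfolding FormF_def using unit2 zero cc dd by simp
qed

lemma FormF_odd:
  assumes F: "FormF 0 A B X" and G: "FormF l C D Y" and l: "1 \<le> l"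
  shows "FormF 0 A (\<lambda>r. B r + (if l = 1 then C r else 0)) (X \<odot> Y)"
proof -
  have uX: "unit X" and uY: "unit Y" using F G by (simp_all add: FormF_def)
  have a: "X r (Suc r) = A r" and b: "X r (Suc (Suc r)) = B r" for r
    using F by (simp_all add: FormF_def)
  have y1: "Y r (Suc r) = 0" for r
    using G l unfolding FormF_def by (metis Suc_eq_plus1 zero_less_one)
  have y2: "Y r (Suc (Suc r)) = (if l = 1 then C r else 0)" for r
  proof (cases "l = 1")
    case True then show ?thesis using G by (simp add: FormF_def)
  next
    case False
    then have "0 < (2::nat)" "2 \<le> l" using l by auto
    then have "Y r (r + 2) = 0" using G unfolding FormF_def by blast
    then show ?thesis using False by simp
  qed
  show ?thesis unfolding FormF_def
    using prod_diag1[OF uX uY] prod_diag2[OF uX uY] uX uY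
    by (simp add: unit_def prod_diag0 a b y1 y2)
qed



lemma upper_iinv[simp]: "upper (iinv X)"
  by (simp add: upper_def iinv_def Iim_def)

lemma unit_iinv[simp]: "unit (iinv X)"
  by (simp add: unit_def iinv_def Iim_def)

lemma iinv_diags:
  assumes up: "upper X" and un: "unit X"
  shows "iinv X r (Suc r) = X r (Suc r)"
    and "iinv X r (Suc (Suc r)) = X r (Suc (Suc r)) + X r (Suc r) ** X (Suc r) (Suc (Suc r))"
proof -
  define NX where "NX = (\<lambda>a b. - (X a b - Iim a b))"
  have NXe: "NX a b = X a b + Iim a b" for a b by (simp add: NX_def)
  have upN: "upper NX" using up by (simp add: upper_def NXe Iim_def)
  have N0: "NX a a = 0" for a using un by (simp add: NXe unit_def Iim_def)
  have Nne: "a \<noteq> b \<Longrightarrow> NX a b = X a b" for a b by (simp add: NXe Iim_def)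
  have p1: "ipow NX 1 = NX" using upN by (rule ipow_one)
  have p2: "ipow NX 2 = NX \<odot> NX"
    using upN by (simp add: numeral_2_eq_2 Iim_right)
  have iv: "iinv X = (\<lambda>r s. \<Sum>k\<le>s - r. ipow NX k r s)"
    by (simp add: iinv_def NX_def fun_eq_iff)
  have "iinv X r (Suc r) = ipow NX 0 r (Suc r) + ipow NX 1 r (Suc r)"
    by (simp add: iv)
  also have "\<dots> = X r (Suc r)" using p1 by (simp add: Iim_def Nne)
  finally show "iinv X r (Suc r) = X r (Suc r)" .
  have sq: "(NX \<odot> NX) r (Suc (Suc r)) = X r (Suc r) ** X (Suc r) (Suc (Suc r))"
    using imult_diag[of NX NX r 2] by (simp add: numeral_2_eq_2 N0 Nne)
  have "iinv X r (Suc (Suc r)) = ipow NX 0 r (Suc (Suc r)) + ipow NX 1 r (Suc (Suc r)) + ipow NX 2 r (Suc (Suc r))"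
    by (simp add: iv numeral_2_eq_2)
  also have "\<dots> = X r (Suc (Suc r)) + X r (Suc r) ** X (Suc r) (Suc (Suc r))"
    using p1 p2 sq by (simp add: Iim_def Nne)
  finally show "iinv X r (Suc (Suc r)) = X r (Suc (Suc r)) + X r (Suc r) ** X (Suc r) (Suc (Suc r))" .
qed

lemma periodic_imult: assumes "periodic3 X" "periodic3 Y" shows "periodic3 (X \<odot> Y)"
  unfolding periodic3_def
proof (intro allI impI)
  fix r s :: nat assume rs: "1 \<le> r \<and> 1 \<le> s"
  have "(X \<odot> Y) (r + 3) (s + 3) = (\<Sum>t\<in>{r+3..s+3}. X (r + 3) t ** Y t (s + 3))"
    by (simp add: imult_def)
  also have "\<dots> = (\<Sum>t\<in>{r..s}. X (r + 3) (t + 3) ** Y (t + 3) (s + 3))"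
    by (rule sum.shift_bounds_cl_nat_ivl)
  also have "\<dots> = (\<Sum>t\<in>{r..s}. X r t ** Y t s)"
    using assms rs by (intro sum.cong) (auto simp: periodic3_def)
  finally show "(X \<odot> Y) (r + 3) (s + 3) = (X \<odot> Y) r s" by (simp add: imult_def)
qed

lemma periodic_Iim[simp]: "periodic3 Iim"
  by (simp add: periodic3_def Iim_def)

lemma periodic_ipow: "periodic3 X \<Longrightarrow> periodic3 (ipow X n)"
  by (induct n) (simp_all add: periodic_imult)

lemma periodic_iinv: assumes "periodic3 X" shows "periodic3 (iinv X)"
proof -
  have "periodic3 (\<lambda>a b. - (X a b - Iim a b))"
    using assms by (simp add: periodic3_def Iim_def)
  then have "periodic3 (ipow (\<lambda>a b. - (X a b - Iim a b)) k)" for k by (rule periodic_ipow)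
  then show ?thesis by (simp add: periodic3_def iinv_def)
qed

definition cb :: "dcode \<Rightarrow> nat \<Rightarrow> blk" where
  "cb c r = diag_blk c (cls3 r)"

lemma cb_per: "cb c (r + 3) = cb c r"
  by (simp add: cb_def cls3_def)

lemma periodic_Mfin: "periodic3 (Mfin cs)"
  by (simp add: periodic3_def Mfin_def cls3_def)

lemma upper_Mfin: "upper (Mfin cs)" by (simp add: upper_def Mfin_def)
lemma unit_Mfin: "unit (Mfin cs)" by (simp add: unit_def Mfin_def)
lemma Mfin_d1: "cs \<noteq> [] \<Longrightarrow> Mfin cs r (Suc r) = cb (cs ! 0) r"
  by (cases cs) (simp_all add: Mfin_def cb_def)
lemma Mfin_d2: "2 \<le> length cs \<Longrightarrow> Mfin cs r (Suc (Suc r)) = cb (cs ! 1) r"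
  by (simp add: Mfin_def cb_def)

lemma FormF_is_M:
  assumes F: "FormF l (cb c) (cb d) X" and P: "periodic3 X"
  shows "is_M l [c, d] X"
proof -
  have cls: "1 \<le> i \<Longrightarrow> i \<le> 3 \<Longrightarrow> cls3 i = i" for i
  proof -
    assume "1 \<le> i" "i \<le> 3"
    then have "i = 1 \<or> i = 2 \<or> i = 3" by auto
    then show ?thesis by (auto simp: cls3_def)
  qed
  show ?thesis
    unfolding is_M_def upper_unitri_def
  proof (intro conjI allI impI)
    show "periodic3 X" by (rule P)
  next
    fix r :: nat assume "1 \<le> r" then show "X r r = mat 1" using F by (simp add: FormF_def unit_def)
  next
    fix r s :: nat assume "1 \<le> s \<and> s < r" then show "X r s = 0" using F by (simp add: FormF_def upper_def)
  next
    fix j i :: nat assume "1 \<le> j \<and> j \<le> l \<and> 1 \<le> i \<and> i \<le> 3"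
    then show "X i (i + j) = 0" using F by (simp add: FormF_def)
  next
    fix k i :: nat assume a: "k < length [c, d] \<and> 1 \<le> i \<and> i \<le> 3"
    then have "k = 0 \<or> k = 1" by auto
    then show "X i (i + l + 1 + k) = diag_blk ([c, d] ! k) i"
    proof
      assume "k = 0" then show ?thesis using F a cls[of i] by (simp add: FormF_def cb_def)
    next
      assume "k = 1"
      then have "i + l + 1 + k = i + l + 2" by simp
      then show ?thesis using F a cls[of i] \<open>k = 1\<close> by (simp add: FormF_def cb_def)
    qed
  qed
qed



lemma per_mult: fixes F :: "nat \<Rightarrow> 'b" assumes "\<And>r. F (r + 3) = F r" shows "F (a + 3 * q) = F a"
proof (induct q)
  case (Suc q)
  have "F (a + 3 * Suc q) = F (a + 3 * q + 3)" by (simp add: algebra_simps)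
  also have "\<dots> = F (a + 3 * q)" by (rule assms)
  finally show ?case using Suc by simp
qed simp

lemma pow2_mod3: "(2::nat) ^ k mod 3 = (if even k then 1 else 2)"
proof (induct k)
  case (Suc k)
  have "(2::nat) ^ Suc k mod 3 = (2 * (2 ^ k mod 3)) mod 3" by (simp add: mod_mult_right_eq)
  then show ?case using Suc by auto
qed simp

lemma per_shift:
  fixes F :: "nat \<Rightarrow> 'b"
  assumes "\<And>r. F (r + 3) = F r"
  shows "F (a + 2 ^ k) = F (a + (if even k then 1 else 2))"
proof -
  have e: "a + 2 ^ k = a + (2 ^ k mod 3) + 3 * (2 ^ k div 3)" by simp
  have "F (a + (2 ^ k mod 3) + 3 * (2 ^ k div 3)) = F (a + (2 ^ k mod 3))" by (rule per_mult[of F, OF assms])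
  then have "F (a + 2 ^ k) = F (a + (2 ^ k mod 3))" by (simp only: e[symmetric])
  then show ?thesis by (simp add: pow2_mod3)
qed

lemma even_decomp: "1 \<le> (n::nat) \<Longrightarrow> even n \<Longrightarrow> \<exists>r k. 1 \<le> r \<and> n = 2 ^ r * (2 * k + 1)"
proof (induction n rule: less_induct)
  case (less n)
  then obtain m where m: "n = 2 * m" "1 \<le> m" by (auto elim: evenE)
  show ?case
  proof (cases "even m")
    case True
    then obtain r k where "1 \<le> r" "m = 2 ^ r * (2 * k + 1)" using less.IH[of m] m by auto
    then show ?thesis using m by (intro exI[of _ "Suc r"] exI[of _ k]) simp
  next
    case False
    then obtain k where "m = 2 * k + 1" by (auto elim: oddE)
    then show ?thesis using m by (intro exI[of _ 1] exI[of _ k]) simp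
  qed
qed

lemma odd_not_pow: "1 \<le> r \<Longrightarrow> odd (n::nat) \<Longrightarrow> n \<noteq> 2 ^ r * (2 * k + 1)"
  by (cases r) auto

lemma generic:
  fixes n :: nat and X :: imat and A Bx By Cx Cy Dx Dy :: "nat \<Rightarrow> blk"
  assumes FX: "FormF 0 A Bx X"
    and h1: "\<And>r. Bx r + Cx r = By r"
    and h2: "\<And>r. A r ** A (r + 1) = Cx r"
    and h3: "\<And>r. A r ** Bx (r + 1) + Bx r ** A (r + 2) = Dx r"
    and h3': "\<And>r. A r ** By (r + 1) + By r ** A (r + 2) = Dx r"
    and h4: "\<And>r. Cx r ** Cx (r + 2) = Cy r"
    and h4': "\<And>r. Cx r ** Dx (r + 2) + Dx r ** Cx (r + 3) = Dy r"
    and h5: "\<And>r. Cy r ** Cy (r + 1) = Cx r"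
    and h5': "\<And>r. Cy r ** Dy (r + 1) + Dy r ** Cy (r + 2) = Dx r"
    and pC1: "\<And>r. Cx (r + 3) = Cx r" and pC2: "\<And>r. Cy (r + 3) = Cy r"
    and pD1: "\<And>r. Dx (r + 3) = Dx r" and pD2: "\<And>r. Dy (r + 3) = Dy r"
  shows "1 \<le> n \<Longrightarrow>
    (n mod 4 = 1 \<longrightarrow> FormF 0 A Bx (ipow X n)) \<and>
    (n mod 4 = 3 \<longrightarrow> FormF 0 A By (ipow X n)) \<and>
    (\<forall>r k. 1 \<le> r \<longrightarrow> n = 2 ^ r * (2 * k + 1) \<longrightarrow>
       FormF (2 ^ r - 1) (if odd r then Cx else Cy) (if odd r then Dx else Dy) (ipow X n))"
proof (induction n rule: less_induct)
  case (less n)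
  have upX: "upper X" using FX by (simp add: FormF_def)
  have cs: "n = 1 \<or> (odd n \<and> 3 \<le> n) \<or> even n" using less.prems by presburger
  consider "n = 1" | "odd n" "3 \<le> n" | "even n" using cs by blast
  then show ?case
  proof cases
    case 1
    then show ?thesis using FX ipow_one[OF upX] odd_not_pow by auto
  next
    case 2
    then obtain m where m: "n = Suc (2 * m)" "1 \<le> m" by (auto elim!: oddE)
    obtain r k where rk: "1 \<le> r" "2 * m = 2 ^ r * (2 * k + 1)"
      using even_decomp[of "2 * m"] m by auto
    have IH: "FormF (2 ^ r - 1) (if odd r then Cx else Cy) (if odd r then Dx else Dy) (ipow X (2 * m))"
      using less.IH[of "2 * m"] m rk by auto
    have pw: "ipow X n = X \<odot> ipow X (2 * m)" using m by simp
    have "(2::nat) ^ 1 \<le> 2 ^ r" by (rule power_increasing) (use rk in simp_all)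
    then have l1: "1 \<le> 2 ^ r - (1::nat)" by simp
    have Fo: "FormF 0 A (\<lambda>x. Bx x + (if 2 ^ r - 1 = (1::nat) then (if odd r then Cx else Cy) x else 0)) (ipow X n)"
      unfolding pw by (rule FormF_odd[OF FX IH l1])
    show ?thesis
    proof (cases "r = 1")
      case True
      then have "m = 2 * k + 1" using rk by simp
      then have "n mod 4 = 3" using m by presburger
      moreover have "FormF 0 A By (ipow X n)"
        using Fo True by (rule_tac FormF_cong) (auto simp: h1)
      ultimately show ?thesis using 2 odd_not_pow by auto
    next
      case False
      then have r2: "2 \<le> r" using rk by simp
      obtain t where t: "r = t + 2" using r2 by (rule_tac that[of "r - 2"]) simp
      have p4: "(2::nat) ^ r = 4 * 2 ^ (r - 2)" using t by (simp add: power_add)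
      then have "n mod 4 = 1" using m rk p4 by (simp add: mult.assoc) presburger
      moreover have "2 ^ r - 1 \<noteq> (1::nat)" using p4
      proof -
        have "(4::nat) \<le> 2 ^ r" using p4 by simp
        then show ?thesis by simp
      qed
      ultimately show ?thesis using Fo 2 odd_not_pow by (auto intro: FormF_cong)
    qed
  next
    case 3
    then obtain m where m: "n = 2 * m" "1 \<le> m" using less.prems by (auto elim!: evenE)
    have pw: "ipow X n = ipow X m \<odot> ipow X m" using m ipow_add[of X m m] by (simp add: mult_2)
    have "n mod 4 \<noteq> 1" "n mod 4 \<noteq> 3" using 3 by presburger+
    moreover have "FormF (2 ^ r - 1) (if odd r then Cx else Cy) (if odd r then Dx else Dy) (ipow X n)"
      if r: "1 \<le> r" "n = 2 ^ r * (2 * k + 1)" for r k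
    proof (cases "r = 1")
      case True
      then have mk: "m = 2 * k + 1" using r m by simp
      have "m mod 4 = 1 \<or> m mod 4 = 3" using mk by presburger
      have mn: "m < n" using m by simp
      note IHm = less.IH[OF mn m(2)]
      obtain B' where FB: "FormF 0 A B' (ipow X m)" and hB: "\<And>x. A x ** B' (x + 1) + B' x ** A (x + 2) = Dx x"
      proof (cases "m mod 4 = 1")
        case True then show ?thesis using IHm h3 that by blast
      next
        case False then have "m mod 4 = 3" using \<open>m mod 4 = 1 \<or> m mod 4 = 3\<close> by simp
        then show ?thesis using IHm h3' that by blast
      qed
      have F1: "FormF (2 * 0 + 1) (\<lambda>x. A x ** A (x + 0 + 1)) (\<lambda>x. A x ** B' (x + 0 + 1) + B' x ** A (x + 0 + 2)) (ipow X n)"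
        unfolding pw by (rule FormF_sq[OF FB])
      have "FormF (2 * 0 + 1) Cx Dx (ipow X n)"
        by (rule FormF_cong[OF F1]) (use h2 hB in simp_all)
      then show ?thesis using True by simp
    next
      case False
      then have r2: "2 \<le> r" using r by simp
      define j where "j = r - 1"
      have rj: "r = Suc j" "1 \<le> j" using r2 by (simp_all add: j_def)
      have mj: "m = 2 ^ j * (2 * k + 1)" using r m rj by simp
      have IH: "FormF (2 ^ j - 1) (if odd j then Cx else Cy) (if odd j then Dx else Dy) (ipow X m)"
        using less.IH[of m] m mj rj by auto
      have Fs: "FormF (2 * (2 ^ j - 1) + 1)
          (\<lambda>x. (if odd j then Cx else Cy) x ** (if odd j then Cx else Cy) (x + (2 ^ j - 1) + 1))
          (\<lambda>x. (if odd j then Cx else Cy) x ** (if odd j then Dx else Dy) (x + (2 ^ j - 1) + 1) +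
               (if odd j then Dx else Dy) x ** (if odd j then Cx else Cy) (x + (2 ^ j - 1) + 2)) (ipow X n)"
        unfolding pw by (rule FormF_sq[OF IH])
      have pj: "(1::nat) \<le> 2 ^ j" by simp
      have e1: "x + (2 ^ j - 1) + 1 = x + (2::nat) ^ j" for x using pj by simp
      have e2: "x + (2 ^ j - 1) + 2 = (x + 1) + (2::nat) ^ j" for x using pj by simp
      have el: "2 * (2 ^ j - 1) + 1 = 2 ^ r - (1::nat)"
      proof -
        have "(2::nat) ^ r = 2 * 2 ^ j" using rj by simp
        then show ?thesis using pj by arith
      qed
      note Fs' = Fs[unfolded e1 e2 el]
      have e3: "x + 1 + 2 = x + (3::nat)" for x by simp
      show ?thesis
      proof (cases "odd j")
        case True
        have s: "F (x + 2 ^ j) = F (x + 2)" if "\<And>r. F (r + 3) = F r" for F :: "nat \<Rightarrow> blk" and x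
          using per_shift[of F x j, OF that] True by simp
        have "FormF (2 ^ r - 1) Cy Dy (ipow X n)"
        proof (rule FormF_cong[OF Fs'])
          fix x
          show "(if odd j then Cx else Cy) x ** (if odd j then Cx else Cy) (x + 2 ^ j) = Cy x"
            using True s[of Cx x, OF pC1] h4[of x] by simp
          have a1: "Dx (x + 2 ^ j) = Dx (x + 2)" by (rule s[of Dx, OF pD1])
          have a2: "Cx (x + 1 + 2 ^ j) = Cx (x + 3)" using s[of Cx "x + 1", OF pC1] by (simp only: e3)
          show "(if odd j then Cx else Cy) x ** (if odd j then Dx else Dy) (x + 2 ^ j) +
               (if odd j then Dx else Dy) x ** (if odd j then Cx else Cy) (x + 1 + 2 ^ j) = Dy x"
            using True h4'[of x] a1 a2 by simp
        qed
        then show ?thesis using True rj by simp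
      next
        case False
        have s: "F (x + 2 ^ j) = F (x + 1)" if "\<And>r. F (r + 3) = F r" for F :: "nat \<Rightarrow> blk" and x
          using per_shift[of F x j, OF that] False by simp
        have "FormF (2 ^ r - 1) Cx Dx (ipow X n)"
        proof (rule FormF_cong[OF Fs'])
          fix x
          show "(if odd j then Cx else Cy) x ** (if odd j then Cx else Cy) (x + 2 ^ j) = Cx x"
            using False s[of Cy x, OF pC2] h5[of x] by simp
          have a1: "Dy (x + 2 ^ j) = Dy (x + 1)" by (rule s[of Dy, OF pD2])
          have a2: "Cy (x + 1 + 2 ^ j) = Cy (x + 2)" using s[of Cy "x + 1", OF pC2] by simp
          show "(if odd j then Cx else Cy) x ** (if odd j then Dx else Dy) (x + 2 ^ j) +
               (if odd j then Dx else Dy) x ** (if odd j then Cx else Cy) (x + 1 + 2 ^ j) = Dx x"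
            using False h5'[of x] a1 a2 by simp
        qed
        then show ?thesis using False rj by simp
      qed
    qed
    ultimately show ?thesis by blast
  qed
qed



lemma idx3_simps[simp]: "idx3 1 = 1" "idx3 2 = 2" "idx3 3 = 0"
  by (simp_all add: idx3_def)

lemma blk_ent: "blk_of_code c $ p $ q = of_bool (odd (c div 2 ^ (8 - (3 * idx3 p + idx3 q))))"
  by (simp add: blk_of_code_def)

lemma cb_alt: "cb (a, b, d) r = blk_of_code (if r mod 3 = 1 then a else if r mod 3 = 2 then b else d)"
  by (simp add: cb_def diag_blk_def cls3_def)

lemma mod3_cases: "((r::nat) mod 3 = 0 \<Longrightarrow> P) \<Longrightarrow> (r mod 3 = 1 \<Longrightarrow> P) \<Longrightarrow> (r mod 3 = 2 \<Longrightarrow> P) \<Longrightarrow> P"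
  by linarith

lemmas blk_eval = vec_eq_iff forall_3 matrix_matrix_mult_def sum_3 blk_ent


lemma i1: "cb (11,11,11) r + cb (23,224,138) r = cb (28,235,129) r" by (rule mod3_cases[of r]; simp add: cb_alt mod_Suc mod_add_left_eq[symmetric] blk_eval)

lemma i2: "cb (17,17,17) r + cb (11,11,11) r ** cb (23,224,138) (Suc r) + cb (59,136,495) r = cb (46,138,451) r"
  by (rule mod3_cases[of r]; simp add: cb_alt mod_Suc mod_add_left_eq[symmetric] blk_eval)
lemma xh1: "cb (29,211,263) r + cb (51,89,196) r = cb (46,138,451) r"
  by (rule mod3_cases[of r]; simp add: cb_alt mod_Suc mod_add_left_eq[symmetric] blk_eval)

lemma xh2: "cb (28,235,129) r ** cb (28,235,129) (r + 1) = cb (51,89,196) r"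
  by (rule mod3_cases[of r]; simp add: cb_alt mod_Suc mod_add_left_eq[symmetric] blk_eval)

lemma xh3: "cb (28,235,129) r ** cb (29,211,263) (r + 1) + cb (29,211,263) r ** cb (28,235,129) (r + 2) = cb (0,0,0) r"
  by (rule mod3_cases[of r]; simp add: cb_alt mod_Suc mod_add_left_eq[symmetric] blk_eval)

lemma xh3b: "cb (28,235,129) r ** cb (46,138,451) (r + 1) + cb (46,138,451) r ** cb (28,235,129) (r + 2) = cb (0,0,0) r"
  by (rule mod3_cases[of r]; simp add: cb_alt mod_Suc mod_add_left_eq[symmetric] blk_eval)

lemma xh4: "cb (51,89,196) r ** cb (51,89,196) (r + 2) = cb (28,235,129) r"
  by (rule mod3_cases[of r]; simp add: cb_alt mod_Suc mod_add_left_eq[symmetric] blk_eval)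

lemma xh4b: "cb (51,89,196) r ** cb (0,0,0) (r + 2) + cb (0,0,0) r ** cb (51,89,196) (r + 3) = cb (0,0,0) r"
  by (rule mod3_cases[of r]; simp add: cb_alt mod_Suc mod_add_left_eq[symmetric] blk_eval)

lemma xh5: "cb (28,235,129) r ** cb (28,235,129) (r + 1) = cb (51,89,196) r"
  by (rule mod3_cases[of r]; simp add: cb_alt mod_Suc mod_add_left_eq[symmetric] blk_eval)

lemma xh5b: "cb (28,235,129) r ** cb (0,0,0) (r + 1) + cb (0,0,0) r ** cb (28,235,129) (r + 2) = cb (0,0,0) r"
  by (rule mod3_cases[of r]; simp add: cb_alt mod_Suc mod_add_left_eq[symmetric] blk_eval)

lemma yh1: "cb (58,3,445) r + cb (51,89,196) r = cb (9,90,377) r"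
  by (rule mod3_cases[of r]; simp add: cb_alt mod_Suc mod_add_left_eq[symmetric] blk_eval)

lemma yh2: "cb (28,235,129) r ** cb (28,235,129) (r + 1) = cb (51,89,196) r"
  by (rule mod3_cases[of r]; simp add: cb_alt mod_Suc mod_add_left_eq[symmetric] blk_eval)

lemma yh3: "cb (28,235,129) r ** cb (58,3,445) (r + 1) + cb (58,3,445) r ** cb (28,235,129) (r + 2) = cb (0,157,106) r"
  by (rule mod3_cases[of r]; simp add: cb_alt mod_Suc mod_add_left_eq[symmetric] blk_eval)

lemma yh3b: "cb (28,235,129) r ** cb (9,90,377) (r + 1) + cb (9,90,377) r ** cb (28,235,129) (r + 2) = cb (0,157,106) r"
  by (rule mod3_cases[of r]; simp add: cb_alt mod_Suc mod_add_left_eq[symmetric] blk_eval)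

lemma yh4: "cb (51,89,196) r ** cb (51,89,196) (r + 2) = cb (28,235,129) r"
  by (rule mod3_cases[of r]; simp add: cb_alt mod_Suc mod_add_left_eq[symmetric] blk_eval)

lemma yh4b: "cb (51,89,196) r ** cb (0,157,106) (r + 2) + cb (0,157,106) r ** cb (51,89,196) (r + 3) = cb (39,208,186) r"
  by (rule mod3_cases[of r]; simp add: cb_alt mod_Suc mod_add_left_eq[symmetric] blk_eval)

lemma yh5: "cb (28,235,129) r ** cb (28,235,129) (r + 1) = cb (51,89,196) r"
  by (rule mod3_cases[of r]; simp add: cb_alt mod_Suc mod_add_left_eq[symmetric] blk_eval)

lemma yh5b: "cb (28,235,129) r ** cb (39,208,186) (r + 1) + cb (39,208,186) r ** cb (28,235,129) (r + 2) = cb (0,157,106) r"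
  by (rule mod3_cases[of r]; simp add: cb_alt mod_Suc mod_add_left_eq[symmetric] blk_eval)

lemma i3: "cb (46,138,451) r + cb (28,235,129) r ** cb (28,235,129) (Suc r) = cb (29,211,263) r"
  by (rule mod3_cases[of r]; simp add: cb_alt mod_Suc mod_add_left_eq[symmetric] blk_eval)

lemma j1: "cb (12,194,363) r + cb (46,68,217) r ** cb (46,68,217) (Suc r) = cb (37,129,437) r"
  by (rule mod3_cases[of r]; simp add: cb_alt mod_Suc mod_add_left_eq[symmetric] blk_eval)

lemma j2: "cb (46,68,217) r + cb (28,235,129) r = cb (50,175,88) r"
  by (rule mod3_cases[of r]; simp add: cb_alt mod_Suc mod_add_left_eq[symmetric] blk_eval)

lemma j3: "cb (12,194,363) r + cb (46,68,217) r ** cb (28,235,129) (Suc r) + cb (29,211,263) r = cb (23,83,400) r"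
  by (rule mod3_cases[of r]; simp add: cb_alt mod_Suc mod_add_left_eq[symmetric] blk_eval)

lemma j4: "cb (50,175,88) r + cb (46,68,217) r = cb (28,235,129) r"
  by (rule mod3_cases[of r]; simp add: cb_alt mod_Suc mod_add_left_eq[symmetric] blk_eval)

lemma j5: "cb (23,83,400) r + cb (50,175,88) r ** cb (46,68,217) (Suc r) + cb (37,129,437) r = cb (58,3,445) r"
  by (rule mod3_cases[of r]; simp add: cb_alt mod_Suc mod_add_left_eq[symmetric] blk_eval)




lemma unit_imult: "unit X \<Longrightarrow> unit Y \<Longrightarrow> unit (X \<odot> Y)"
  by (simp add: unit_def prod_diag0)

lemma concl:
  fixes X :: imat
  assumes per: "periodic3 (ipow X n)" and n: "1 \<le> n"
    and G: "(n mod 4 = 1 \<longrightarrow> FormF 0 (cb a) (cb b1) (ipow X n)) \<and>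
    (n mod 4 = 3 \<longrightarrow> FormF 0 (cb a) (cb b3) (ipow X n)) \<and>
    (\<forall>r k. 1 \<le> r \<longrightarrow> n = 2 ^ r * (2 * k + 1) \<longrightarrow>
       FormF (2 ^ r - 1) (if odd r then cb c1 else cb c2) (if odd r then cb d1 else cb d2) (ipow X n))"
  shows "is_M 0 [a, b1] (ipow X n) \<or> is_M 0 [a, b3] (ipow X n) \<or>
     (\<exists>r. odd r \<and> r \<ge> 1 \<and> is_M (2 ^ r - 1) [c1, d1] (ipow X n)) \<or>
     (\<exists>r. even r \<and> r \<ge> 2 \<and> is_M (2 ^ r - 1) [c2, d2] (ipow X n))"
proof (cases "even n")
  case False
  then have "n mod 4 = 1 \<or> n mod 4 = 3" by presburger
  then show ?thesis using G FormF_is_M[OF _ per] by blast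
next
  case True
  then obtain r k where rk: "1 \<le> r" "n = 2 ^ r * (2 * k + 1)" using even_decomp n by blast
  show ?thesis
  proof (cases "odd r")
    case True
    then have "FormF (2 ^ r - 1) (cb c1) (cb d1) (ipow X n)" using G rk by auto
    then show ?thesis using FormF_is_M[OF _ per] True rk by blast
  next
    case False
    then have "FormF (2 ^ r - 1) (cb c2) (cb d2) (ipow X n)" using G rk by auto
    moreover have "2 \<le> r" using False rk by presburger
    ultimately show ?thesis using FormF_is_M[OF _ per] False by blast
  qed
qed

definition P0 where "P0 = x0 \<odot> x1"
definition G0 where "G0 = x2 \<odot> xx"

lemma P0_props: "upper P0" "unit P0" "periodic3 P0"
  "P0 r (Suc r) = cb (28,235,129) r" "P0 r (Suc (Suc r)) = cb (46,138,451) r"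
proof -
  show "upper P0" by (simp add: P0_def)
  show u: "unit P0" unfolding P0_def x0_def x1_def by (intro unit_imult unit_Mfin)
  show "periodic3 P0" unfolding P0_def x0_def x1_def by (intro periodic_imult periodic_Mfin)
  show "P0 r (Suc r) = cb (28,235,129) r"
    unfolding P0_def x0_def x1_def prod_diag1[OF unit_Mfin unit_Mfin] by (simp add: Mfin_d1 i1)
  show "P0 r (Suc (Suc r)) = cb (46,138,451) r"
    unfolding P0_def x0_def x1_def prod_diag2[OF unit_Mfin unit_Mfin] by (simp add: Mfin_d1 Mfin_d2 i2)
qed

lemma xx_props: "upper xx" "unit xx" "periodic3 xx"
  "xx r (Suc r) = cb (28,235,129) r" "xx r (Suc (Suc r)) = cb (29,211,263) r"
proof -
  have xe: "xx = iinv P0" by (simp add: xx_def P0_def)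
  show "upper xx" "unit xx" by (simp_all add: xe)
  show "periodic3 xx" by (simp add: xe periodic_iinv P0_props)
  show "xx r (Suc r) = cb (28,235,129) r"
    by (simp add: xe iinv_diags[OF P0_props(1,2)] P0_props)
  show "xx r (Suc (Suc r)) = cb (29,211,263) r"
    by (simp add: xe iinv_diags[OF P0_props(1,2)] P0_props i3)
qed

lemma ix2_props: "upper (iinv x2)" "unit (iinv x2)" "periodic3 (iinv x2)"
  "iinv x2 r (Suc r) = cb (46,68,217) r" "iinv x2 r (Suc (Suc r)) = cb (37,129,437) r"
proof -
  show "upper (iinv x2)" "unit (iinv x2)" by simp_all
  show "periodic3 (iinv x2)" by (simp add: periodic_iinv x2_def periodic_Mfin)
  show "iinv x2 r (Suc r) = cb (46,68,217) r"
    by (simp add: iinv_diags[OF upper_Mfin unit_Mfin] x2_def Mfin_d1)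
  show "iinv x2 r (Suc (Suc r)) = cb (37,129,437) r"
    by (simp add: iinv_diags[OF upper_Mfin unit_Mfin] x2_def Mfin_d1 Mfin_d2 j1)
qed

lemma G0_props: "upper G0" "unit G0" "periodic3 G0"
  "G0 r (Suc r) = cb (50,175,88) r" "G0 r (Suc (Suc r)) = cb (23,83,400) r"
proof -
  show "upper G0" by (simp add: G0_def)
  show "unit G0" unfolding G0_def x2_def by (intro unit_imult unit_Mfin xx_props)
  show "periodic3 G0" unfolding G0_def x2_def by (intro periodic_imult periodic_Mfin xx_props)
  show "G0 r (Suc r) = cb (50,175,88) r"
    unfolding G0_def x2_def prod_diag1[OF unit_Mfin xx_props(2)] by (simp add: Mfin_d1 xx_props j2)
  show "G0 r (Suc (Suc r)) = cb (23,83,400) r"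
    unfolding G0_def x2_def prod_diag2[OF unit_Mfin xx_props(2)] by (simp add: Mfin_d1 Mfin_d2 xx_props j3)
qed

lemma yy_props: "upper yy" "unit yy" "periodic3 yy"
  "yy r (Suc r) = cb (28,235,129) r" "yy r (Suc (Suc r)) = cb (58,3,445) r"
proof -
  have ye: "yy = G0 \<odot> iinv x2" by (simp add: yy_def G0_def)
  show "upper yy" by (simp add: ye)
  show "unit yy" by (simp add: ye unit_imult G0_props)
  show "periodic3 yy" by (simp add: ye periodic_imult G0_props ix2_props)
  show "yy r (Suc r) = cb (28,235,129) r"
    unfolding ye prod_diag1[OF G0_props(2) ix2_props(2)] by (simp add: G0_props ix2_props j4)
  show "yy r (Suc (Suc r)) = cb (58,3,445) r"
    unfolding ye prod_diag2[OF G0_props(2) ix2_props(2)] by (simp add: G0_props ix2_props j5)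
qed

lemma FormF0: "upper X \<Longrightarrow> unit X \<Longrightarrow> (\<And>r. X r (Suc r) = C r) \<Longrightarrow> (\<And>r. X r (Suc (Suc r)) = D r) \<Longrightarrow> FormF 0 C D X"
  by (simp add: FormF_def)

lemma Fxx: "FormF 0 (cb (28,235,129)) (cb (29,211,263)) xx"
  by (rule FormF0) (simp_all add: xx_props)
lemma Fyy: "FormF 0 (cb (28,235,129)) (cb (58,3,445)) yy"
  by (rule FormF0) (simp_all add: yy_props)



theorem corollary4p4:
  shows "(\<forall>n\<ge>1.
     is_M 0 [(28,235,129),(29,211,263)] (ipow xx n) \<or>
     is_M 0 [(28,235,129),(46,138,451)] (ipow xx n) \<or>
     (\<exists>r. odd r \<and> r \<ge> 1 \<and> is_M (2 ^ r - 1) [(51,89,196),(0,0,0)] (ipow xx n)) \<or>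
     (\<exists>r. even r \<and> r \<ge> 2 \<and> is_M (2 ^ r - 1) [(28,235,129),(0,0,0)] (ipow xx n))) \<and>
    (\<forall>n\<ge>1.
     is_M 0 [(28,235,129),(58,3,445)] (ipow yy n) \<or>
     is_M 0 [(28,235,129),(9,90,377)] (ipow yy n) \<or>
     (\<exists>r. odd r \<and> r \<ge> 1 \<and> is_M (2 ^ r - 1) [(51,89,196),(0,157,106)] (ipow yy n)) \<or>
     (\<exists>r. even r \<and> r \<ge> 2 \<and> is_M (2 ^ r - 1) [(28,235,129),(39,208,186)] (ipow yy n)))"
proof (intro conjI allI impI)
  fix n :: nat assume n: "1 \<le> n"
  note gx = generic[where n=n and X=xx and A="cb (28,235,129)" and Bx="cb (29,211,263)" and By="cb (46,138,451)"
      and Cx="cb (51,89,196)" and Cy="cb (28,235,129)" and Dx="cb (0,0,0)" and Dy="cb (0,0,0)",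
      OF Fxx xh1 xh2 xh3 xh3b xh4 xh4b xh5 xh5b cb_per cb_per cb_per cb_per n]
  show "is_M 0 [(28,235,129),(29,211,263)] (ipow xx n) \<or>
     is_M 0 [(28,235,129),(46,138,451)] (ipow xx n) \<or>
     (\<exists>r. odd r \<and> r \<ge> 1 \<and> is_M (2 ^ r - 1) [(51,89,196),(0,0,0)] (ipow xx n)) \<or>
     (\<exists>r. even r \<and> r \<ge> 2 \<and> is_M (2 ^ r - 1) [(28,235,129),(0,0,0)] (ipow xx n))"
    by (rule concl[OF periodic_ipow[OF xx_props(3)] n gx])
next
  fix n :: nat assume n: "1 \<le> n"
  note gy = generic[where n=n and X=yy and A="cb (28,235,129)" and Bx="cb (58,3,445)" and By="cb (9,90,377)"
      and Cx="cb (51,89,196)" and Cy="cb (28,235,129)" and Dx="cb (0,157,106)" and Dy="cb (39,208,186)",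
      OF Fyy yh1 yh2 yh3 yh3b yh4 yh4b yh5 yh5b cb_per cb_per cb_per cb_per n]
  show "is_M 0 [(28,235,129),(58,3,445)] (ipow yy n) \<or>
     is_M 0 [(28,235,129),(9,90,377)] (ipow yy n) \<or>
     (\<exists>r. odd r \<and> r \<ge> 1 \<and> is_M (2 ^ r - 1) [(51,89,196),(0,157,106)] (ipow yy n)) \<or>
     (\<exists>r. even r \<and> r \<ge> 2 \<and> is_M (2 ^ r - 1) [(28,235,129),(39,208,186)] (ipow yy n))"
    by (rule concl[OF periodic_ipow[OF yy_props(3)] n gy])
qed

end
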